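(* Let $n\ge 2$, $b>0$, and let $p_0,\dots,p_{n-2}$ be complex-valued, $C^\infty$, $b$-periodic functions on $\mathbb{R}$; let $\mathcal{L}u := u^{(n)}+\sum_{k=0}^{n-2}p_k(x)u^{(k)}$. If $\psi$ is an eigenfunction of the multipoint problem $$\mathcal{L}u=\lambda u,\qquad u(0)=u(b)=\cdots=u((n-1)b)=0$$ (i.e. a nontrivial solution for some $\lambda\in\mathbb{C}$), then $\psi(kb)=0$ for all $k\in\mathbb{Z}$. *)

theory Defs
  imports "HOL-Analysis.Analysis"
begin

definition hderiv :: "nat \<Rightarrow> (real \<Rightarrow> complex) \<Rightarrow> real \<Rightarrow> complex" where
  "hderiv k f = ((\<lambda>g x. vector_derivative g (at x)) ^^ k) f"

definition k_times_differentiable :: "nat \<Rightarrow> (real \<Rightarrow> complex) \<Rightarrow> bool" where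
  "k_times_differentiable k f \<longleftrightarrow>
     (\<forall>j<k. \<forall>x. (hderiv j f has_vector_derivative hderiv (Suc j) f x) (at x))"

definition smooth_fun :: "(real \<Rightarrow> complex) \<Rightarrow> bool" where
  "smooth_fun f \<longleftrightarrow> (\<forall>k. k_times_differentiable k f)"

end

theory Submission imports Defs "Jordan_Normal_Form.Determinant" begin

lemma hderiv_0[simp]: "hderiv 0 f = f" by (simp add: hderiv_def)
lemma hderiv_Suc: "hderiv (Suc k) f x = vector_derivative (hderiv k f) (at x)"
  by (simp add: hderiv_def)

lemma hderiv_shift:
  assumes "k_times_differentiable m f" "k \<le> m"
  shows "hderiv k (\<lambda>x. f (x + c)) = (\<lambda>x. hderiv k f (x + c))"
  using assms(2)
proof (induction k)
  case 0 show ?case by simp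
next
  case (Suc k)
  have "k < m" using Suc by simp
  show ?case
  proof
    fix x
    have d: "(hderiv k f has_vector_derivative hderiv (Suc k) f (x + c)) (at (x + c))"
      using assms(1) \<open>k<m\<close> unfolding k_times_differentiable_def by blast
    have i: "((\<lambda>y. y + c) has_vector_derivative 1) (at x)"
      by (auto intro!: derivative_eq_intros)
    have "((\<lambda>y. hderiv k f (y + c)) has_vector_derivative hderiv (Suc k) f (x + c)) (at x)"
      using vector_diff_chain_at[OF i, of "hderiv k f"] d by (simp add: o_def)
    then show "hderiv (Suc k) (\<lambda>x. f (x + c)) x = hderiv (Suc k) f (x + c)"
      using Suc by (simp add: hderiv_Suc vector_derivative_at)
  qed
qed

lemma ktd_shift:
  assumes "k_times_differentiable m f"
  shows "k_times_differentiable m (\<lambda>x. f (x + c))"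
  unfolding k_times_differentiable_def
proof (intro allI impI)
  fix j x assume j: "j < m"
  have d: "(hderiv j f has_vector_derivative hderiv (Suc j) f (x + c)) (at (x + c))"
    using assms j unfolding k_times_differentiable_def by blast
  have i: "((\<lambda>y. y + c) has_vector_derivative 1) (at x)"
    by (auto intro!: derivative_eq_intros)
  have "((\<lambda>y. hderiv j f (y + c)) has_vector_derivative hderiv (Suc j) f (x + c)) (at x)"
    using vector_diff_chain_at[OF i, of "hderiv j f"] d by (simp add: o_def)
  then show "(hderiv j (\<lambda>x. f (x + c)) has_vector_derivative hderiv (Suc j) (\<lambda>x. f (x + c)) x) (at x)"
    using hderiv_shift[OF assms, of j c] hderiv_shift[OF assms, of "Suc j" c] j by simp
qed

lemma hderiv_lincomb:
  assumes "finite S" "\<And>j. j \<in> S \<Longrightarrow> k_times_differentiable m (\<phi> j)" "k \<le> m"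
  shows "hderiv k (\<lambda>x. \<Sum>j\<in>S. c j * \<phi> j x) = (\<lambda>x. \<Sum>j\<in>S. c j * hderiv k (\<phi> j) x)"
  using assms(3)
proof (induction k)
  case 0 show ?case by simp
next
  case (Suc k)
  have "k < m" using Suc by simp
  show ?case
  proof
    fix x
    have "((\<lambda>y. \<Sum>j\<in>S. c j * hderiv k (\<phi> j) y) has_vector_derivative (\<Sum>j\<in>S. c j * hderiv (Suc k) (\<phi> j) x)) (at x)"
      apply (intro has_vector_derivative_sum has_vector_derivative_mult_right)
      using assms(2) \<open>k<m\<close> unfolding k_times_differentiable_def by blast
    then show "hderiv (Suc k) (\<lambda>x. \<Sum>j\<in>S. c j * \<phi> j x) x = (\<Sum>j\<in>S. c j * hderiv (Suc k) (\<phi> j) x)"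
      using Suc by (simp add: hderiv_Suc vector_derivative_at)
  qed
qed

lemma ktd_lincomb:
  assumes "finite S" "\<And>j. j \<in> S \<Longrightarrow> k_times_differentiable m (\<phi> j)"
  shows "k_times_differentiable m (\<lambda>x. \<Sum>j\<in>S. c j * \<phi> j x)"
  unfolding k_times_differentiable_def
proof (intro allI impI)
  fix k x assume k: "k < m"
  have "((\<lambda>y. \<Sum>j\<in>S. c j * hderiv k (\<phi> j) y) has_vector_derivative (\<Sum>j\<in>S. c j * hderiv (Suc k) (\<phi> j) x)) (at x)"
    apply (intro has_vector_derivative_sum has_vector_derivative_mult_right)
    using assms(2) k unfolding k_times_differentiable_def by blast
  then show "(hderiv k (\<lambda>x. \<Sum>j\<in>S. c j * \<phi> j x) has_vector_derivative hderiv (Suc k) (\<lambda>x. \<Sum>j\<in>S. c j * \<phi> j x) x) (at x)"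
    using hderiv_lincomb[OF assms(1,2), where k=k and c=c] hderiv_lincomb[OF assms(1,2), where k="Suc k" and c=c] k by simp
qed


lemma uniq:
  fixes u :: "real \<Rightarrow> complex" and p :: "nat \<Rightarrow> real \<Rightarrow> complex"
  assumes pc: "\<And>k. k \<le> n - 2 \<Longrightarrow> continuous_on UNIV (p k)"
    and d: "k_times_differentiable n u"
    and ode: "\<And>x. hderiv n u x + (\<Sum>k\<le>n - 2. p k x * hderiv k u x) = lam * u x"
    and z: "\<And>k. k < n \<Longrightarrow> hderiv k u 0 = 0"
    and n: "n \<ge> 1"
  shows "u x = 0"
proof -
  define f where "f k = hderiv k u" for k
  have hd: "(f k has_vector_derivative f (Suc k) y) (at y)" if "k < n" for k y
    using d that by (simp add: k_times_differentiable_def f_def)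
  define E where "E y = (\<Sum>k<n. (cmod (f k y))^2)" for y
  define E' where "E' y = (\<Sum>k<n. 2 * Re (f (Suc k) y * cnj (f k y)))" for y
  have dE: "(E has_real_derivative E' y) (at y)" for y
  proof -
    have sq: "(cmod z)^2 = Re (z * cnj z)" for z
      using cmod_power2[of z] by (simp add: power2_eq_square)
    have "((\<lambda>y. Re (f k y * cnj (f k y))) has_real_derivative 2 * Re (f (Suc k) y * cnj (f k y))) (at y)"
      if k: "k < n" for k
    proof -
      have "((\<lambda>y. f k y * cnj (f k y)) has_vector_derivative
          (f k y * cnj (f (Suc k) y) + f (Suc k) y * cnj (f k y))) (at y)"
        by (intro has_vector_derivative_mult has_vector_derivative_cnj hd k)
      then have "((\<lambda>y. Re (f k y * cnj (f k y))) has_vector_derivative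
          Re (f k y * cnj (f (Suc k) y) + f (Suc k) y * cnj (f k y))) (at y)"
        by (rule bounded_linear.has_vector_derivative[OF bounded_linear_Re])
      moreover have "Re (f k y * cnj (f (Suc k) y) + f (Suc k) y * cnj (f k y)) = 2 * Re (f (Suc k) y * cnj (f k y))"
        by simp
      ultimately show ?thesis
        by (simp add: has_real_derivative_iff_has_vector_derivative mult.commute)
    qed
    then have "((\<lambda>y. \<Sum>k<n. Re (f k y * cnj (f k y))) has_real_derivative E' y) (at y)"
      unfolding E'_def by (intro DERIV_sum) auto
    then show ?thesis unfolding E_def sq .
  qed
  have Enn: "E y \<ge> 0" for y unfolding E_def by (intro sum_nonneg) auto
  have fle: "cmod (f k y) \<le> sqrt (E y)" if "k < n" for k y
  proof -
    have "(cmod (f k y))^2 \<le> E y" unfolding E_def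
      using that by (intro member_le_sum) auto
    then show ?thesis by (simp add: real_le_rsqrt)
  qed
  have sE: "sqrt (E y) * sqrt (E y) = E y" for y using Enn by simp
  define R where "R = \<bar>x\<bar>"
  obtain y0 where y0: "y0 \<in> {-R..R}" "\<And>y. y \<in> {-R..R} \<Longrightarrow> (\<Sum>k\<le>n-2. cmod (p k y)) \<le> (\<Sum>k\<le>n-2. cmod (p k y0))"
    using continuous_attains_sup[of "{-R..R}" "\<lambda>y. \<Sum>k\<le>n-2. cmod (p k y)"]
      pc R_def by (force intro!: continuous_intros intro: continuous_on_subset)
  define C where "C = (\<Sum>k\<le>n-2. cmod (p k y0))"
  have C0: "C \<ge> 0" unfolding C_def by (intro sum_nonneg) auto
  define K where "K = 2 * real n * (1 + C + cmod lam)"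
  have bnd: "\<bar>E' y\<bar> \<le> K * E y" if y: "y \<in> {-R..R}" for y
  proof -
    have fn: "cmod (f n y) \<le> (cmod lam + C) * sqrt (E y)"
    proof -
      have "f n y = lam * f 0 y - (\<Sum>k\<le>n - 2. p k y * f k y)"
        using ode[of y] unfolding f_def by (simp add: algebra_simps eq_diff_eq)
      then have "cmod (f n y) \<le> cmod (lam * f 0 y) + cmod (\<Sum>k\<le>n - 2. p k y * f k y)"
        by (simp add: norm_triangle_ineq4)
      also have "\<dots> \<le> cmod lam * cmod (f 0 y) + (\<Sum>k\<le>n - 2. cmod (p k y * f k y))"
        by (intro add_mono norm_sum) (auto simp: norm_mult)
      finally have "cmod (f n y) \<le> cmod lam * cmod (f 0 y) + (\<Sum>k\<le>n - 2. cmod (p k y) * cmod (f k y))"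
        by (simp add: norm_mult)
      also have "\<dots> \<le> cmod lam * sqrt (E y) + (\<Sum>k\<le>n - 2. cmod (p k y) * sqrt (E y))"
        using n fle by (intro add_mono mult_left_mono sum_mono) auto
      also have "\<dots> = cmod lam * sqrt (E y) + (\<Sum>k\<le>n - 2. cmod (p k y)) * sqrt (E y)"
        by (simp add: sum_distrib_right)
      also have "\<dots> \<le> cmod lam * sqrt (E y) + C * sqrt (E y)"
        using y0(2)[OF y] Enn[of y] unfolding C_def by (intro add_mono mult_right_mono) auto
      finally show ?thesis by (simp add: algebra_simps)
    qed
    have tm: "\<bar>2 * Re (f (Suc k) y * cnj (f k y))\<bar> \<le> 2 * (1 + C + cmod lam) * E y" if k: "k < n" for k
    proof -
      have "\<bar>2 * Re (f (Suc k) y * cnj (f k y))\<bar> \<le> 2 * (cmod (f (Suc k) y) * cmod (f k y))"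
        using abs_Re_le_cmod[of "f (Suc k) y * cnj (f k y)"] by (simp add: norm_mult)
      also have "\<dots> \<le> 2 * (((1 + C + cmod lam) * sqrt (E y)) * sqrt (E y))"
      proof -
        have "cmod (f (Suc k) y) \<le> (1 + C + cmod lam) * sqrt (E y)"
        proof (cases "Suc k < n")
          case True
          then have "cmod (f (Suc k) y) \<le> 1 * sqrt (E y)" using fle by simp
          also have "\<dots> \<le> (1 + C + cmod lam) * sqrt (E y)"
            using C0 Enn[of y] by (intro mult_right_mono) auto
          finally show ?thesis .
        next
          case False
          then have "Suc k = n" using k by simp
          then have "cmod (f (Suc k) y) \<le> (cmod lam + C) * sqrt (E y)" using fn by simp
          also have "\<dots> \<le> (1 + C + cmod lam) * sqrt (E y)"
            using Enn[of y] by (intro mult_right_mono) auto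
          finally show ?thesis .
        qed
        then show ?thesis using fle[OF k] C0 Enn[of y]
          by (intro mult_left_mono mult_mono) auto
      qed
      also have "\<dots> = 2 * (1 + C + cmod lam) * E y" using sE[of y] by (simp add: algebra_simps)
      finally show ?thesis .
    qed
    have "\<bar>E' y\<bar> \<le> (\<Sum>k<n. \<bar>2 * Re (f (Suc k) y * cnj (f k y))\<bar>)"
      unfolding E'_def by (rule sum_abs)
    also have "\<dots> \<le> (\<Sum>k<n. 2 * (1 + C + cmod lam) * E y)"
      using tm by (intro sum_mono) auto
    also have "\<dots> = K * E y" by (simp add: K_def)
    finally show ?thesis .
  qed
  have E0: "E 0 = 0" unfolding E_def using z by (simp add: f_def)
  have "E x \<le> 0"
  proof (cases "x \<ge> 0")
    case True
    define g' where "g' y = E' y * exp (- K * y) + E y * (- K * exp (- K * y))" for y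
    have "E x * exp (- K * x) \<le> E 0 * exp (- K * 0)"
    proof (rule deriv_nonpos_imp_antimono[where g' = g' and g = "\<lambda>y. E y * exp (- K * y)" and a=0 and b=x])
      fix y assume "y \<in> {0..x}"
      show "((\<lambda>y. E y * exp (- K * y)) has_real_derivative g' y) (at y)"
        unfolding g'_def by (auto intro!: derivative_eq_intros dE)
    next
      fix y assume "y \<in> {0..x}"
      have "y \<in> {-R..R}" using \<open>y \<in> {0..x}\<close> R_def by auto
      then have "E' y \<le> K * E y" using bnd by fastforce
      then show "g' y \<le> 0" unfolding g'_def
        by (simp add: algebra_simps mult_right_mono[of _ _ "exp (- (K * y))", simplified] )
    qed (use True in auto)
    then show ?thesis using E0 by (simp add: mult_le_0_iff)
  next
    case False
    define g' where "g' y = E' y * exp (K * y) + E y * (K * exp (K * y))" for y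
    have "E x * exp (K * x) \<le> E 0 * exp (K * 0)"
    proof (rule deriv_nonneg_imp_mono[where g' = g' and g = "\<lambda>y. E y * exp (K * y)" and a=x and b=0])
      fix y assume "y \<in> {x..0}"
      show "((\<lambda>y. E y * exp (K * y)) has_real_derivative g' y) (at y)"
        unfolding g'_def by (auto intro!: derivative_eq_intros dE)
    next
      fix y assume "y \<in> {x..0}"
      have "y \<in> {-R..R}" using \<open>y \<in> {x..0}\<close> R_def by auto
      then have "- E' y \<le> K * E y" using bnd by fastforce
      then have "0 \<le> (E' y + K * E y) * exp (K * y)" by (intro mult_nonneg_nonneg) auto
      then show "g' y \<ge> 0" unfolding g'_def
        by (simp add: algebra_simps)
    qed (use False in auto)
    then show ?thesis using E0 by (simp add: mult_le_0_iff)
  qed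
  then have "sqrt (E x) = 0" using Enn[of x] by simp
  then have "cmod (f 0 x) \<le> 0" using fle[of 0 x] n by simp
  then show ?thesis by (simp add: f_def)
qed


theorem corollary4:
  fixes n :: nat and b :: real and p :: "nat \<Rightarrow> real \<Rightarrow> complex"
    and \<psi> :: "real \<Rightarrow> complex" and lam :: complex
  assumes "n \<ge> 2" and "b > 0"
    and "\<And>k. k \<le> n - 2 \<Longrightarrow> smooth_fun (p k)"
    and "\<And>k x. k \<le> n - 2 \<Longrightarrow> p k (x + b) = p k x"
    and "k_times_differentiable n \<psi>"
    and "\<And>x. hderiv n \<psi> x + (\<Sum>k\<le>n - 2. p k x * hderiv k \<psi> x) = lam * \<psi> x"
    and "\<And>j. j \<le> n - 1 \<Longrightarrow> \<psi> (real j * b) = 0"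
    and "\<exists>x. \<psi> x \<noteq> 0"
  shows "\<forall>k::int. \<psi> (of_int k * b) = 0"
proof -
  note n2 = assms(1) and sm = assms(3) and per0 = assms(4) and dpsi = assms(5)
    and ode = assms(6) and zer = assms(7)
  have n1: "n \<ge> 1" using n2 by simp
  have pc: "continuous_on UNIV (p k)" if k: "k \<le> n - 2" for k
  proof -
    have "k_times_differentiable 1 (p k)" using sm[OF k] by (simp add: smooth_fun_def)
    then have "\<And>x. (p k has_vector_derivative hderiv 1 (p k) x) (at x)"
      by (simp add: k_times_differentiable_def)
    then show ?thesis by (intro continuous_on_vector_derivative) auto
  qed
  have per: "p k (x + real j * b) = p k x" if k: "k \<le> n - 2" for k j x
  proof (induction j)
    case 0 then show ?case by simp
  next
    case (Suc j)
    have "x + real (Suc j) * b = (x + real j * b) + b" by (simp add: algebra_simps)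
    then show ?case using per0[OF k, of "x + real j * b"] Suc by (simp add: add.assoc)
  qed
  define \<phi> where "\<phi> j = (\<lambda>x. \<psi> (x + real j * b))" for j
  have dphi: "k_times_differentiable n (\<phi> j)" for j
    unfolding \<phi>_def by (rule ktd_shift[OF dpsi])
  have hphi: "hderiv k (\<phi> j) x = hderiv k \<psi> (x + real j * b)" if "k \<le> n" for k j x
    unfolding \<phi>_def using hderiv_shift[OF dpsi that] by simp
  have odephi: "hderiv n (\<phi> j) x + (\<Sum>k\<le>n - 2. p k x * hderiv k (\<phi> j) x) = lam * \<phi> j x" for j x
  proof -
    have "(\<Sum>k\<le>n - 2. p k x * hderiv k (\<phi> j) x) = (\<Sum>k\<le>n - 2. p k (x + real j * b) * hderiv k \<psi> (x + real j * b))"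
      using hphi per n2 by (intro sum.cong) auto
    then show ?thesis using ode[of "x + real j * b"] hphi[of n j x] by (simp add: \<phi>_def)
  qed
  define S where "S = {0..<n+1}"
  have finS: "finite S" by (simp add: S_def)
  define r where "r i = vec (n+1) (\<lambda>j. hderiv i (\<phi> j) 0)" for i
  define A where "A = mat\<^sub>r (n+1) (n+1) (\<lambda>i. if i = n then 0\<^sub>v (n+1) else r i)"
  have "det A = 0" unfolding A_def
    by (rule det_row_0) (auto simp: r_def)
  moreover have Acar: "A \<in> carrier_mat (n+1) (n+1)" unfolding A_def by simp
  ultimately obtain v where v: "v \<in> carrier_vec (n+1)" "v \<noteq> 0\<^sub>v (n+1)" "A *\<^sub>v v = 0\<^sub>v (n+1)"
    using det_0_iff_vec_prod_zero by blast
  define c where "c j = v $ j" for j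
  have cnz: "\<exists>j\<in>S. c j \<noteq> 0"
  proof (rule ccontr)
    assume "\<not> ?thesis"
    then have "v = 0\<^sub>v (n+1)" using v(1) by (intro eq_vecI) (auto simp: c_def S_def)
    with v(2) show False by simp
  qed
  have eqs: "(\<Sum>j\<in>S. c j * hderiv i (\<phi> j) 0) = 0" if i: "i < n" for i
  proof -
    have "(A *\<^sub>v v) $ i = 0" using v(3) i by simp
    moreover have "(A *\<^sub>v v) $ i = row A i \<bullet> v" using i by (simp add: A_def)
    moreover have "row A i = r i" using i by (simp add: A_def r_def)
    ultimately show ?thesis using v(1) i
      by (simp add: scalar_prod_def r_def c_def S_def mult.commute)
  qed
  define L where "L x = (\<Sum>j\<in>S. c j * \<phi> j x)" for x
  have Lfun: "L = (\<lambda>x. \<Sum>j\<in>S. c j * \<phi> j x)" by (simp add: L_def fun_eq_iff)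
  have hL: "hderiv k L = (\<lambda>x. \<Sum>j\<in>S. c j * hderiv k (\<phi> j) x)" if "k \<le> n" for k
    unfolding Lfun using hderiv_lincomb[OF finS dphi that] by simp
  have dL: "k_times_differentiable n L"
    unfolding Lfun by (rule ktd_lincomb[OF finS dphi])
  have odeL: "hderiv n L x + (\<Sum>k\<le>n - 2. p k x * hderiv k L x) = lam * L x" for x
  proof -
    have "(\<Sum>k\<le>n - 2. p k x * hderiv k L x) = (\<Sum>k\<le>n - 2. \<Sum>j\<in>S. c j * (p k x * hderiv k (\<phi> j) x))"
      using hL n2 by (intro sum.cong) (auto simp: sum_distrib_left mult.left_commute)
    also have "\<dots> = (\<Sum>j\<in>S. \<Sum>k\<le>n - 2. c j * (p k x * hderiv k (\<phi> j) x))"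
      by (rule sum.swap)
    also have "\<dots> = (\<Sum>j\<in>S. c j * (\<Sum>k\<le>n - 2. p k x * hderiv k (\<phi> j) x))"
      by (simp add: sum_distrib_left)
    finally have "hderiv n L x + (\<Sum>k\<le>n - 2. p k x * hderiv k L x)
        = (\<Sum>j\<in>S. c j * (hderiv n (\<phi> j) x + (\<Sum>k\<le>n - 2. p k x * hderiv k (\<phi> j) x)))"
      using hL[of n] by (simp add: distrib_left sum.distrib)
    also have "\<dots> = (\<Sum>j\<in>S. lam * (c j * \<phi> j x))" using odephi by (simp add: mult.left_commute)
    also have "\<dots> = lam * L x" by (simp add: L_def sum_distrib_left)
    finally show ?thesis .
  qed
  have L0: "L x = 0" for x
  proof (rule uniq[OF pc dL odeL _ n1])
    fix k assume k: "k < n"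
    show "hderiv k L 0 = 0" using hL[of k] k eqs[OF k] by simp
  qed
  define a where "a m = \<psi> (of_int m * b)" for m :: int
  have rec: "(\<Sum>j\<in>S. c j * a (k + int j)) = 0" for k :: int
  proof -
    have "\<phi> j (of_int k * b) = a (k + int j)" for j
      by (simp add: \<phi>_def a_def distrib_right)
    then show ?thesis using L0[of "of_int k * b"] by (simp add: L_def)
  qed
  define J where "J = {j\<in>S. c j \<noteq> 0}"
  have finJ: "finite J" "J \<noteq> {}" using cnz finS by (auto simp: J_def)
  define lo where "lo = Min J"
  define hi where "hi = Max J"
  have loJ: "lo \<in> J" and hiJ: "hi \<in> J" using finJ by (auto simp: lo_def hi_def)
  have bndJ: "lo \<le> j \<and> j \<le> hi" if "j \<in> J" for j using finJ that by (auto simp: lo_def hi_def)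
  have hin: "hi \<le> n" using hiJ by (auto simp: J_def S_def)
  define W where "W t = (\<forall>i. t \<le> i \<and> i < t + int n \<longrightarrow> a i = 0)" for t :: int
  have fwd: "a (t + int n) = 0" if "W t" for t
  proof -
    define k where "k = t + int n - int hi"
    have "(\<Sum>j\<in>S. c j * a (k + int j)) = c hi * a (k + int hi) + (\<Sum>j\<in>S - {hi}. c j * a (k + int j))"
      using hiJ finS by (intro sum.remove) (auto simp: J_def)
    moreover have "(\<Sum>j\<in>S - {hi}. c j * a (k + int j)) = 0"
    proof (intro sum.neutral ballI)
      fix j assume j: "j \<in> S - {hi}"
      show "c j * a (k + int j) = 0"
      proof (cases "c j = 0")
        case False
        then have "j \<in> J" using j by (auto simp: J_def)
        then have "lo \<le> j" "j < hi" using bndJ j by force+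
        then have "a (k + int j) = 0" using \<open>W t\<close> hin unfolding W_def k_def by auto
        then show ?thesis by simp
      qed simp
    qed
    ultimately have "c hi * a (t + int n) = 0" using rec[of k] by (simp add: k_def)
    then show ?thesis using hiJ by (auto simp: J_def)
  qed
  have bwd: "a (t - 1) = 0" if "W t" for t
  proof -
    define k where "k = t - 1 - int lo"
    have "(\<Sum>j\<in>S. c j * a (k + int j)) = c lo * a (k + int lo) + (\<Sum>j\<in>S - {lo}. c j * a (k + int j))"
      using loJ finS by (intro sum.remove) (auto simp: J_def)
    moreover have "(\<Sum>j\<in>S - {lo}. c j * a (k + int j)) = 0"
    proof (intro sum.neutral ballI)
      fix j assume j: "j \<in> S - {lo}"
      show "c j * a (k + int j) = 0"
      proof (cases "c j = 0")
        case False
        then have "j \<in> J" using j by (auto simp: J_def)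
        then have "lo < j" "j \<le> hi" using bndJ j by force+
        then have "a (k + int j) = 0" using \<open>W t\<close> hin unfolding W_def k_def by auto
        then show ?thesis by simp
      qed simp
    qed
    ultimately have "c lo * a (t - 1) = 0" using rec[of k] by (simp add: k_def)
    then show ?thesis using loJ by (auto simp: J_def)
  qed
  have W0: "W 0"
    unfolding W_def
  proof (intro allI impI)
    fix i :: int assume i: "0 \<le> i \<and> i < 0 + int n"
    then have "i = int (nat i)" "nat i \<le> n - 1" by auto
    then show "a i = 0" using zer[of "nat i"] unfolding a_def by (metis of_int_of_nat_eq)
  qed
  have Wall: "W t" for t
  proof (induction t rule: int_induct[where k=0])
    case base then show ?case by (rule W0)
  next
    case (step1 i)
    then show ?case using fwd[of i] unfolding W_def
      by (metis add.commute add_le_cancel_left le_less not_less zless_add1_eq add.assoc)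
  next
    case (step2 i)
    then show ?case using bwd[of i] unfolding W_def
      by (smt (verit))
  qed
  show ?thesis
  proof
    fix k :: int
    show "\<psi> (of_int k * b) = 0" using Wall[of k] n1 unfolding W_def a_def by auto
  qed
qed

end
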